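(* For every $n\ge1$, $\Phi_n(x)$ is a polynomial of degree $n+2$, and \[ \Phi_n(2)=\Phi_n'(2)=0,\qquad \Phi_n(-2)=16(n+1)(-1)^n. \]
   Context: $U_n$ is the Chebyshev polynomial of the second kind, $U_n(\cos\theta)=\sin((n+1)\theta)/\sin\theta$, $\tilde U_n(x)=U_n(x/2)$, and $\Phi_n(x)=((n+1)x^2-6x-4n)\tilde U_n(x)+2(x+2)\tilde U_{n-1}(x)+2(x+2)$. *)

theory Defs
  imports "HOL-Computational_Algebra.Polynomial"
begin

text \<open>Chebyshev polynomials of the second kind, as real polynomials, via the standard
  recurrence U_0 = 1, U_1 = 2x, U_(n+2) = 2x U_(n+1) - U_n
  (equivalently U_n(cos t) = sin((n+1)t)/sin t).\<close>
fun chebU :: "nat \<Rightarrow> real poly" where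
  "chebU 0 = 1"
| "chebU (Suc 0) = [:0, 2:]"
| "chebU (Suc (Suc n)) = [:0, 2:] * chebU (Suc n) - chebU n"

definition chebUt :: "nat \<Rightarrow> real poly" where
  "chebUt n = pcompose (chebU n) [:0, 1/2:]"

definition Phi :: "nat \<Rightarrow> real poly" where
  "Phi n = [:- 4 * real n, -6, real n + 1:] * chebUt n
           + smult 2 [:2, 1:] * chebUt (n - 1) + smult 2 [:2, 1:]"

end

theory Submission
  imports Defs
begin

lemma T0: "chebUt 0 = 1" by (simp add: chebUt_def one_pCons pcompose_pCons)
lemma T1: "chebUt (Suc 0) = [:0,1:]" by (simp add: chebUt_def pcompose_pCons)
lemma T2: "chebUt (Suc (Suc n)) = [:0,1:] * chebUt (Suc n) - chebUt n"
  by (simp add: chebUt_def pcompose_mult pcompose_diff pcompose_pCons pcompose_smult)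

lemma Tdeg: "degree (chebUt n) = n \<and> coeff (chebUt n) n = 1"
proof (induction n rule: chebU.induct)
  case 1 then show ?case by (simp add: T0)
next
  case 2 then show ?case by (simp add: T1)
next
  case (3 n)
  have d: "degree ([:0,1:] * chebUt (Suc n)) = Suc (Suc n)"
    using 3 by (subst degree_mult_eq) (auto)
  have c: "coeff ([:0,1:] * chebUt (Suc n)) (Suc (Suc n)) = 1"
    using 3 by simp
  have "degree (chebUt n) < degree ([:0,1:] * chebUt (Suc n))" using d 3 by simp
  then have "degree ([:0,1:] * chebUt (Suc n) - chebUt n) = Suc (Suc n)"
    using d degree_add_eq_left[of "- chebUt n" "[:0,1:] * chebUt (Suc n)"] by simp
  moreover have "coeff (chebUt n) (Suc (Suc n)) = 0" using 3 by (simp add: coeff_eq_0)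
  ultimately show ?case using c by (simp add: T2)
qed

lemma Tval: "poly (chebUt n) 2 = real n + 1 \<and> poly (chebUt n) (-2) = (-1)^n * (real n + 1)
   \<and> poly (pderiv (chebUt n)) 2 = real n * (real n + 1) * (real n + 2) / 6"
proof (induction n rule: chebU.induct)
  case 1 then show ?case by (simp add: T0)
next
  case 2 then show ?case by (simp add: T1 pderiv_pCons)
next
  case (3 n)
  then show ?case by (simp add: T2 pderiv_mult pderiv_diff pderiv_pCons algebra_simps divide_simps)
qed

theorem lemma4p9:
  fixes n :: nat
  assumes "n \<ge> 1"
  shows "degree (Phi n) = n + 2
       \<and> poly (Phi n) 2 = 0
       \<and> poly (pderiv (Phi n)) 2 = 0
       \<and> poly (Phi n) (-2) = 16 * (real n + 1) * (-1) ^ n"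
proof -
  obtain m where m: "n = Suc m" using assms by (cases n) auto
  let ?A = "[:- 4 * real n, -6, real n + 1:]"
  let ?B = "smult 2 [:2, 1:] * chebUt (n - 1) + smult 2 [:2, (1::real):]"
  have P: "Phi n = ?A * chebUt n + ?B" by (simp add: Phi_def)
  have dA: "degree (?A * chebUt n) = n + 2"
    using Tdeg[of n] by (subst degree_mult_eq) auto
  have "degree (smult 2 [:2, 1:] * chebUt (n - 1)) \<le> n"
    using Tdeg[of "n-1"] m order.trans[OF degree_mult_le, of "smult 2 [:2, 1:]" "chebUt (n - 1)" n]
    by simp
  moreover have "degree (smult 2 [:2, (1::real):]) \<le> n" using m by simp
  ultimately have "degree ?B \<le> n" by (meson degree_add_le)
  then have deg: "degree (Phi n) = n + 2" using dA P
    by (subst P, subst degree_add_eq_left) auto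
  have v1: "poly (chebUt (n-1)) 2 = real n" "poly (pderiv (chebUt (n-1))) 2 = (real n - 1) * real n * (real n + 1) / 6"
    using Tval[of m] m by (auto simp: algebra_simps)
  have D: "pderiv (Phi n) = pderiv ?A * chebUt n + ?A * pderiv (chebUt n)
     + (pderiv (smult 2 [:2, 1:]) * chebUt (n - 1) + smult 2 [:2, 1:] * pderiv (chebUt (n - 1)))
     + pderiv (smult 2 [:2, (1::real):])"
    unfolding P pderiv_add pderiv_mult by simp
  have "poly (pderiv (Phi n)) 2 = 0"
    unfolding D using Tval[of n] v1
    by (simp add: pderiv_pCons pderiv_smult algebra_simps divide_simps)
  then show ?thesis
    using deg Tval[of n] v1
    by (simp add: P algebra_simps)
qed

end
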